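(* Assume $\mathbb Ef(\boldsymbol X)=0$ and $p_{\min}>0$. Let $s\ge1$, let $m_1,\dots,m_{s-1}\in\{1,\dots,M\}$, define $R_0\equiv0$ and $R_t(\boldsymbol X)=R_{t-1}(\boldsymbol X)+\mathbb E(f(\boldsymbol X)-R_{t-1}(\boldsymbol X)\mid\boldsymbol X_{\mathcal X(m_t)})$ for $1\le t\le s-1$, and let $m\in\{1,\dots,M\}\setminus\{m_1,\dots,m_{s-1}\}$. Then $$\Big|\mathbb E\big[(\mathbb E(f(\boldsymbol X)-R_{s-1}(\boldsymbol X)\mid\boldsymbol X_{\mathcal X(m)}))^2\big]-\mathrm{Var}(g_m(\boldsymbol X))\Big|\le\frac{21\,\delta_0}{p_{\min}^2}\,\mathbb E[f(\boldsymbol X)^2].$$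
   Context: Setup. $\boldsymbol X=(X_1,\dots,X_p)^\top$ is a random vector in $\{0,1\}^p$; $\{1,\dots,p\}$ is partitioned into disjoint nonempty feature groups $\mathcal X(1),\dots,\mathcal X(M)$, $M\ge2$; a group is either a single feature or has $\#\mathcal X(m)>1$ and consists of one-hot indicators ($\sum_{j\in\mathcal X(m)}\mathbf 1\{X_j=1\}=1$ a.s.). $\boldsymbol X_H=(X_j)_{j\in H}$, $\boldsymbol X_{-H}=(X_j)_{j\notin H}$. Conditional expectations given null events are set to $0$. $p_{\min}=\min_{1\le l<k\le M,\,i\in\mathcal X(l),\,j\in\mathcal X(k),\,(a,b)\in\{0,1\}^2}\mathbb P(X_i=a,X_j=b)$; $\delta_0=\max_{1\le m\le M}\inf\{\delta\ge0:\mathbb P(\max_{i\in\mathcal X(m)}|\mathbb P(X_i=1\mid\boldsymbol X_{-\mathcal X(m)})-\mathbb P(X_i=1)|\le\delta)=1\}$. For $f:\{0,1\}^p\to\mathbb R$, $g_m(\boldsymbol X)=\mathbb E(f(\boldsymbol X)-\mathbb E(f(\boldsymbol X)\mid\boldsymbol X_{-\mathcal X(m)})\mid\boldsymbol X_{\mathcal X(m)})$. *)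

theory Defs
  imports "HOL-Probability.Probability"
begin

text \<open>The law of the random vector X in {0,1}^p is a pmf P on nat \<Rightarrow> bool
  (coordinates 1..p; coordinates outside {1..p} are always False).
  Conditional expectation of Y given X_H, evaluated at the outcome x;
  conditioning on a null event gives 0.\<close>

definition cond_exp :: "(nat \<Rightarrow> bool) pmf \<Rightarrow> nat set \<Rightarrow> ((nat \<Rightarrow> bool) \<Rightarrow> real) \<Rightarrow> (nat \<Rightarrow> bool) \<Rightarrow> real" where
  "cond_exp P H Y x =
     (let A = {y. \<forall>j\<in>H. y j = x j} in
      if measure_pmf.prob P A = 0 then 0
      else measure_pmf.expectation P (\<lambda>y. indicator A y * Y y) / measure_pmf.prob P A)"

definition p_min :: "(nat \<Rightarrow> bool) pmf \<Rightarrow> (nat \<Rightarrow> nat set) \<Rightarrow> nat \<Rightarrow> real" where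
  "p_min P G M = Min {measure_pmf.prob P {x. x i = a \<and> x j = b} | l k i j a b.
      1 \<le> l \<and> l < k \<and> k \<le> M \<and> i \<in> G l \<and> j \<in> G k}"

definition delta0 :: "(nat \<Rightarrow> bool) pmf \<Rightarrow> (nat \<Rightarrow> nat set) \<Rightarrow> nat \<Rightarrow> nat \<Rightarrow> real" where
  "delta0 P G M p = Max ((\<lambda>m. Inf {\<delta>. \<delta> \<ge> 0 \<and>
      measure_pmf.prob P {x. Max ((\<lambda>i. \<bar>cond_exp P ({1..p} - G m) (\<lambda>y. if y i then 1 else 0) x
             - measure_pmf.prob P {y. y i}\<bar>) ` G m) \<le> \<delta>} = 1}) ` {1..M})"

definition g_fun :: "(nat \<Rightarrow> bool) pmf \<Rightarrow> (nat \<Rightarrow> nat set) \<Rightarrow> nat \<Rightarrow> ((nat \<Rightarrow> bool) \<Rightarrow> real) \<Rightarrow> nat \<Rightarrow> (nat \<Rightarrow> bool) \<Rightarrow> real" where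
  "g_fun P G p f m = cond_exp P (G m) (\<lambda>y. f y - cond_exp P ({1..p} - G m) f y)"

fun R_seq :: "(nat \<Rightarrow> bool) pmf \<Rightarrow> (nat \<Rightarrow> nat set) \<Rightarrow> ((nat \<Rightarrow> bool) \<Rightarrow> real) \<Rightarrow> (nat \<Rightarrow> nat) \<Rightarrow> nat \<Rightarrow> (nat \<Rightarrow> bool) \<Rightarrow> real" where
  "R_seq P G f ms 0 = (\<lambda>x. 0)"
| "R_seq P G f ms (Suc t) = (\<lambda>x. R_seq P G f ms t x
      + cond_exp P (G (ms (Suc t))) (\<lambda>y. f y - R_seq P G f ms t y) x)"

end

theory Submission
  imports Defs
begin


lemma E_sum: "finite (set_pmf P) \<Longrightarrow> measure_pmf.expectation P (u::_\<Rightarrow>real) = (\<Sum>x\<in>set_pmf P. pmf P x * u x)"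
  by (subst integral_measure_pmf_real[where A="set_pmf P"]) (auto simp: mult.commute)

lemma prob_sum: "finite (set_pmf P) \<Longrightarrow> measure_pmf.prob P A = (\<Sum>x\<in>set_pmf P. pmf P x * indicator A x)"
proof -
  assume f: "finite (set_pmf P)"
  have "measure_pmf.prob P A = measure_pmf.expectation P (indicator A :: _ \<Rightarrow> real)"
    by simp
  also have "\<dots> = (\<Sum>x\<in>set_pmf P. pmf P x * indicator A x)" by (rule E_sum[OF f])
  finally show ?thesis .
qed

definition agree :: "nat set \<Rightarrow> (nat \<Rightarrow> bool) \<Rightarrow> (nat \<Rightarrow> bool) \<Rightarrow> bool" where
  "agree H x y \<longleftrightarrow> (\<forall>j\<in>H. y j = x j)"

lemma cond_exp_alt: "finite (set_pmf P) \<Longrightarrow> x \<in> set_pmf P \<Longrightarrow>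
  cond_exp P H Y x = (\<Sum>y\<in>set_pmf P. pmf P y * indicator {y. agree H x y} y * Y y) /
                     (\<Sum>y\<in>set_pmf P. pmf P y * indicator {y. agree H x y} y)"
proof -
  assume f: "finite (set_pmf P)" and x: "x \<in> set_pmf P"
  let ?A = "{y. \<forall>j\<in>H. y j = x j}"
  have pos: "measure_pmf.prob P ?A > 0" by (rule measure_pmf_posI[OF x]) simp
  show ?thesis unfolding cond_exp_def Let_def using pos
    by (simp add: E_sum[OF f] prob_sum[OF f] agree_def mult.assoc)
qed

lemma cond_exp_meas: "agree H x x' \<Longrightarrow> cond_exp P H Y x = cond_exp P H Y x'"
  unfolding cond_exp_def agree_def by (metis (no_types, lifting))

lemma cond_exp_cong: "finite (set_pmf P) \<Longrightarrow> (\<And>z. z \<in> set_pmf P \<Longrightarrow> Y z = Y' z) \<Longrightarrow>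
   cond_exp P H Y x = cond_exp P H Y' x"
  unfolding cond_exp_def Let_def by (simp add: E_sum)

lemma cond_exp_diff: "finite (set_pmf P) \<Longrightarrow>
   cond_exp P H (\<lambda>y. Y y - Z y) x = cond_exp P H Y x - cond_exp P H Z x"
  unfolding cond_exp_def Let_def
  by (simp add: E_sum algebra_simps sum_subtractf diff_divide_distrib)

lemma agree_sym: "agree H x y = agree H y x" unfolding agree_def by auto
lemma agree_trans: "agree H x y \<Longrightarrow> agree H y z \<Longrightarrow> agree H x z" unfolding agree_def by auto

lemma cond_exp_proj:
  assumes f: "finite (set_pmf P)"
    and Z: "\<And>x y. x \<in> set_pmf P \<Longrightarrow> y \<in> set_pmf P \<Longrightarrow> agree H x y \<Longrightarrow> Z x = Z y"
  shows "measure_pmf.expectation P (\<lambda>x. cond_exp P H Y x * Z x) = measure_pmf.expectation P (\<lambda>x. Y x * Z x)"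
proof -
  define S where "S = set_pmf P"
  define w where "w = pmf P"
  define I where "I = (\<lambda>x y. indicator {y. agree H x y} y :: real)"
  define N where "N = (\<lambda>x. \<Sum>y\<in>S. w y * I x y)"
  have Isym: "I x y = I y x" for x y unfolding I_def indicator_def by (simp add: agree_sym)
  have Npos: "N x > 0" if "x \<in> S" for x
  proof -
    have "N x \<ge> w x * I x x" unfolding N_def
      using that f by (intro member_le_sum) (auto simp: w_def I_def S_def)
    moreover have "w x * I x x > 0" using that by (auto simp: w_def I_def S_def agree_def pmf_positive)
    ultimately show ?thesis by simp
  qed
  have NI: "N x = N y" if "I x y \<noteq> 0" for x y
  proof -
    have a: "agree H x y" using that unfolding I_def by (auto split: split_indicator_asm)
    have "agree H x z = agree H y z" for z using a agree_trans agree_sym by metis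
    hence "agree H x = agree H y" by (rule ext)
    thus ?thesis unfolding N_def I_def by simp
  qed
  have "measure_pmf.expectation P (\<lambda>x. cond_exp P H Y x * Z x)
      = (\<Sum>x\<in>S. w x * ((\<Sum>y\<in>S. w y * I x y * Y y) / N x * Z x))"
    using f by (simp add: E_sum cond_exp_alt S_def w_def I_def N_def)
  also have "\<dots> = (\<Sum>x\<in>S. \<Sum>y\<in>S. w x * w y * I x y * Y y * Z x / N x)"
    by (simp add: sum_distrib_left sum_distrib_right sum_divide_distrib mult.assoc)
  also have "\<dots> = (\<Sum>y\<in>S. \<Sum>x\<in>S. w x * w y * I x y * Y y * Z x / N x)"
    by (rule sum.swap)
  also have "\<dots> = (\<Sum>y\<in>S. \<Sum>x\<in>S. w x * I y x * (w y * Y y * Z y / N y))"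
  proof (intro sum.cong refl)
    fix y x assume y: "y \<in> S" and x: "x \<in> S"
    show "w x * w y * I x y * Y y * Z x / N x = w x * I y x * (w y * Y y * Z y / N y)"
    proof (cases "I x y = 0")
      case True thus ?thesis by (simp add: Isym)
    next
      case False
      hence "agree H x y" unfolding I_def by (auto split: split_indicator_asm)
      hence "Z x = Z y" using Z x y by (simp add: S_def)
      thus ?thesis using NI[OF False] by (simp add: Isym)
    qed
  qed
  also have "\<dots> = (\<Sum>y\<in>S. N y * (w y * Y y * Z y / N y))"
    by (intro sum.cong refl) (simp only: sum_distrib_right N_def)
  also have "\<dots> = (\<Sum>y\<in>S. w y * (Y y * Z y))"
  proof (intro sum.cong refl)
    fix y assume "y \<in> S" hence "N y \<noteq> 0" using Npos by (metis less_irrefl)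
    thus "N y * (w y * Y y * Z y / N y) = w y * (Y y * Z y)" by (simp add: field_simps)
  qed
  also have "\<dots> = measure_pmf.expectation P (\<lambda>x. Y x * Z x)"
    using f by (simp add: E_sum S_def w_def)
  finally show ?thesis .
qed



lemma cond_exp_tower:
  assumes f: "finite (set_pmf P)"
  shows "measure_pmf.expectation P (cond_exp P H Y) = measure_pmf.expectation P Y"
  using cond_exp_proj[OF f, of H "\<lambda>_. 1" Y] by simp

lemma sum_sq_expand: "(\<Sum>x\<in>S. w x * (a x - b x)\<^sup>2) =
   (\<Sum>x\<in>S. w x * (a x)\<^sup>2) - 2 * (\<Sum>x\<in>S. w x * (a x * b x)) + (\<Sum>x\<in>S. w x * (b x)\<^sup>2)"
  for w a b :: "'a \<Rightarrow> real"
proof -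
  have "(\<Sum>x\<in>S. w x * (a x - b x)\<^sup>2) = (\<Sum>x\<in>S. (w x * (a x)\<^sup>2 - 2 * (w x * (a x * b x))) + w x * (b x)\<^sup>2)"
    by (intro sum.cong refl) (simp add: power2_eq_square algebra_simps)
  also have "\<dots> = (\<Sum>x\<in>S. w x * (a x)\<^sup>2) - 2 * (\<Sum>x\<in>S. w x * (a x * b x)) + (\<Sum>x\<in>S. w x * (b x)\<^sup>2)"
    by (simp only: sum.distrib sum_subtractf sum_distrib_left)
  finally show ?thesis .
qed

lemma cond_exp_sq:
  assumes f: "finite (set_pmf P)"
  shows "measure_pmf.expectation P (\<lambda>x. (Y x - cond_exp P H Y x)\<^sup>2)
       = measure_pmf.expectation P (\<lambda>x. (Y x)\<^sup>2) - measure_pmf.expectation P (\<lambda>x. (cond_exp P H Y x)\<^sup>2)"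
proof -
  have p: "measure_pmf.expectation P (\<lambda>x. cond_exp P H Y x * cond_exp P H Y x)
      = measure_pmf.expectation P (\<lambda>x. Y x * cond_exp P H Y x)"
    by (rule cond_exp_proj[OF f]) (auto intro: cond_exp_meas)
  have q: "measure_pmf.expectation P (\<lambda>x. (cond_exp P H Y x)\<^sup>2) = measure_pmf.expectation P (\<lambda>x. cond_exp P H Y x * cond_exp P H Y x)"
    by (simp add: power2_eq_square)
  show ?thesis using p q unfolding E_sum[OF f] sum_sq_expand by simp
qed

lemma cond_exp_contr:
  assumes f: "finite (set_pmf P)"
  shows "measure_pmf.expectation P (\<lambda>x. (cond_exp P H Y x)\<^sup>2) \<le> measure_pmf.expectation P (\<lambda>x. (Y x)\<^sup>2)"
    "measure_pmf.expectation P (\<lambda>x. (Y x - cond_exp P H Y x)\<^sup>2) \<le> measure_pmf.expectation P (\<lambda>x. (Y x)\<^sup>2)"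
proof -
  have a: "measure_pmf.expectation P (\<lambda>x. (Y x - cond_exp P H Y x)\<^sup>2) \<ge> 0"
    by (rule Bochner_Integration.integral_nonneg) auto
  have b: "measure_pmf.expectation P (\<lambda>x. (cond_exp P H Y x)\<^sup>2) \<ge> 0"
    by (rule Bochner_Integration.integral_nonneg) auto
  show "measure_pmf.expectation P (\<lambda>x. (cond_exp P H Y x)\<^sup>2) \<le> measure_pmf.expectation P (\<lambda>x. (Y x)\<^sup>2)"
    "measure_pmf.expectation P (\<lambda>x. (Y x - cond_exp P H Y x)\<^sup>2) \<le> measure_pmf.expectation P (\<lambda>x. (Y x)\<^sup>2)"
    using a b cond_exp_sq[OF f, of Y H] by linarith+
qed

lemma sum_pmf_one: "finite (set_pmf P) \<Longrightarrow> (\<Sum>x\<in>set_pmf P. pmf P x) = 1"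
  using E_sum[of P "\<lambda>_. 1"] by simp

lemma E_abs_le: 
  assumes f: "finite (set_pmf P)"
  shows "measure_pmf.expectation P (\<lambda>x. \<bar>u x\<bar>) \<le> sqrt (measure_pmf.expectation P (\<lambda>x. (u x)\<^sup>2))"
proof -
  define c where "c = measure_pmf.expectation P (\<lambda>x. \<bar>u x\<bar>)"
  have c_sum: "c = (\<Sum>x\<in>set_pmf P. pmf P x * \<bar>u x\<bar>)" unfolding c_def E_sum[OF f] ..
  have "0 \<le> measure_pmf.expectation P (\<lambda>x. (\<bar>u x\<bar> - c)\<^sup>2)"
    by (rule Bochner_Integration.integral_nonneg) auto
  also have "\<dots> = (\<Sum>x\<in>set_pmf P. pmf P x * (u x)\<^sup>2) - 2 * (\<Sum>x\<in>set_pmf P. pmf P x * (\<bar>u x\<bar> * c))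
       + (\<Sum>x\<in>set_pmf P. pmf P x * c\<^sup>2)"
    unfolding E_sum[OF f] sum_sq_expand[where a="\<lambda>x. \<bar>u x\<bar>" and b="\<lambda>_. c"] by simp
  also have "\<dots> = measure_pmf.expectation P (\<lambda>x. (u x)\<^sup>2) - c\<^sup>2"
  proof -
    have "(\<Sum>x\<in>set_pmf P. pmf P x * (\<bar>u x\<bar> * c)) = c * c"
      unfolding c_sum by (simp only: sum_distrib_right mult.assoc)
    moreover have "(\<Sum>x\<in>set_pmf P. pmf P x * c\<^sup>2) = c\<^sup>2"
      using sum_pmf_one[OF f] by (simp add: sum_distrib_right[symmetric])
    ultimately show ?thesis unfolding E_sum[OF f] by (simp add: power2_eq_square)
  qed
  finally have "c\<^sup>2 \<le> measure_pmf.expectation P (\<lambda>x. (u x)\<^sup>2)" by simp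
  hence "sqrt (c\<^sup>2) \<le> sqrt (measure_pmf.expectation P (\<lambda>x. (u x)\<^sup>2))" by (rule real_sqrt_le_mono)
  moreover have "c \<ge> 0" unfolding c_def by (rule Bochner_Integration.integral_nonneg) auto
  ultimately show ?thesis unfolding c_def by simp
qed



lemma keyK:
  fixes h :: "(nat \<Rightarrow> bool) \<Rightarrow> real"
  assumes f: "finite (set_pmf P)" and x: "x \<in> set_pmf P"
    and hD: "\<And>y z. y \<in> set_pmf P \<Longrightarrow> z \<in> set_pmf P \<Longrightarrow> agree D y z \<Longrightarrow> h y = h z"
    and h0: "measure_pmf.expectation P h = 0"
    and bound: "\<And>z. z \<in> set_pmf P \<Longrightarrow>
       \<bar>cond_exp P D (indicator {y. \<forall>j\<in>H. y j = x j}) z - measure_pmf.prob P {y. \<forall>j\<in>H. y j = x j}\<bar> \<le> \<delta>"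
    and pm: "0 < pm" "pm \<le> measure_pmf.prob P {y. \<forall>j\<in>H. y j = x j}"
  shows "\<bar>cond_exp P H h x\<bar> \<le> \<delta> * measure_pmf.expectation P (\<lambda>y. \<bar>h y\<bar>) / pm"
proof -
  define A where "A = {y. \<forall>j\<in>H. y j = x j}"
  define S where "S = set_pmf P"
  define w where "w = pmf P"
  define g where "g = (\<lambda>z. cond_exp P D (indicator A) z - measure_pmf.prob P A)"
  have pA: "measure_pmf.prob P A > 0" using pm unfolding A_def by linarith
  have d0: "\<delta> \<ge> 0" using bound[OF x] by linarith
  have w0: "w z \<ge> 0" for z unfolding w_def by simp
  have ce: "cond_exp P H h x = measure_pmf.expectation P (\<lambda>y. indicator A y * h y) / measure_pmf.prob P A"
    unfolding cond_exp_def Let_def A_def using pA A_def by simp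
  have "measure_pmf.expectation P (\<lambda>y. indicator A y * h y)
      = measure_pmf.expectation P (\<lambda>y. cond_exp P D (indicator A) y * h y)"
    by (rule cond_exp_proj[OF f, symmetric]) (use hD in auto)
  also have "\<dots> = (\<Sum>z\<in>S. w z * (g z * h z)) + measure_pmf.prob P A * measure_pmf.expectation P h"
    unfolding E_sum[OF f] S_def w_def g_def
    by (simp add: algebra_simps sum.distrib sum_distrib_left sum_subtractf)
  also have "\<dots> = (\<Sum>z\<in>S. w z * (g z * h z))" using h0 by simp
  finally have eq: "measure_pmf.expectation P (\<lambda>y. indicator A y * h y) = (\<Sum>z\<in>S. w z * (g z * h z))" .
  have "\<bar>\<Sum>z\<in>S. w z * (g z * h z)\<bar> \<le> (\<Sum>z\<in>S. \<bar>w z * (g z * h z)\<bar>)" by (rule sum_abs)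
  also have "\<dots> \<le> (\<Sum>z\<in>S. \<delta> * (w z * \<bar>h z\<bar>))"
  proof (rule sum_mono)
    fix z assume z: "z \<in> S"
    have "\<bar>g z\<bar> \<le> \<delta>" using bound z unfolding g_def A_def S_def by blast
    hence "\<bar>g z\<bar> * \<bar>h z\<bar> \<le> \<delta> * \<bar>h z\<bar>" by (simp add: mult_right_mono)
    hence "w z * (\<bar>g z\<bar> * \<bar>h z\<bar>) \<le> w z * (\<delta> * \<bar>h z\<bar>)" using w0 by (simp add: mult_left_mono)
    thus "\<bar>w z * (g z * h z)\<bar> \<le> \<delta> * (w z * \<bar>h z\<bar>)" using w0 by (simp add: abs_mult algebra_simps)
  qed
  also have "\<dots> = \<delta> * measure_pmf.expectation P (\<lambda>y. \<bar>h y\<bar>)"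
    unfolding E_sum[OF f] S_def w_def by (simp add: sum_distrib_left)
  finally have num: "\<bar>measure_pmf.expectation P (\<lambda>y. indicator A y * h y)\<bar> \<le> \<delta> * measure_pmf.expectation P (\<lambda>y. \<bar>h y\<bar>)"
    using eq by simp
  have Eh: "measure_pmf.expectation P (\<lambda>y. \<bar>h y\<bar>) \<ge> 0" by (rule Bochner_Integration.integral_nonneg) auto
  have "\<bar>cond_exp P H h x\<bar> = \<bar>measure_pmf.expectation P (\<lambda>y. indicator A y * h y)\<bar> / measure_pmf.prob P A"
    using ce pA by simp
  also have "\<dots> \<le> \<delta> * measure_pmf.expectation P (\<lambda>y. \<bar>h y\<bar>) / measure_pmf.prob P A"
    using num pA by (simp add: divide_right_mono)
  also have "\<dots> \<le> \<delta> * measure_pmf.expectation P (\<lambda>y. \<bar>h y\<bar>) / pm"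
    using pm d0 Eh A_def by (intro divide_left_mono) auto
  finally show ?thesis .
qed



definition vfun :: "(nat \<Rightarrow> bool) pmf \<Rightarrow> (nat \<Rightarrow> nat set) \<Rightarrow> nat \<Rightarrow> nat \<Rightarrow> (nat \<Rightarrow> bool) \<Rightarrow> real" where
  "vfun P G p m x = Max ((\<lambda>i. \<bar>cond_exp P ({1..p} - G m) (\<lambda>y. if y i then 1 else 0) x
             - measure_pmf.prob P {y. y i}\<bar>) ` G m)"

definition Tset :: "(nat \<Rightarrow> bool) pmf \<Rightarrow> (nat \<Rightarrow> nat set) \<Rightarrow> nat \<Rightarrow> nat \<Rightarrow> real set" where
  "Tset P G p m = {\<delta>. \<delta> \<ge> 0 \<and> measure_pmf.prob P {x. vfun P G p m x \<le> \<delta>} = 1}"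

lemma delta0_alt: "delta0 P G M p = Max ((\<lambda>m. Inf (Tset P G p m)) ` {1..M})"
  unfolding delta0_def Tset_def vfun_def ..

lemma Tset_ne: assumes fin: "finite (set_pmf P)" shows "(\<Sum>z\<in>set_pmf P. \<bar>vfun P G p m z\<bar>) \<in> Tset P G p m"
proof -
  let ?d = "(\<Sum>z\<in>set_pmf P. \<bar>vfun P G p m z\<bar>)"
  have "\<forall>y\<in>set_pmf P. vfun P G p m y \<le> ?d"
  proof
    fix y assume y: "y \<in> set_pmf P"
    have "\<bar>vfun P G p m y\<bar> \<le> ?d" using fin y by (intro member_le_sum) auto
    thus "vfun P G p m y \<le> ?d" by linarith
  qed
  hence "measure_pmf.prob P {x. vfun P G p m x \<le> ?d} = 1"
    by (subst measure_pmf.prob_eq_1) (auto simp: AE_measure_pmf_iff)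
  moreover have "?d \<ge> 0" by (intro sum_nonneg) auto
  ultimately show ?thesis unfolding Tset_def by blast
qed

lemma Tset_lb: assumes "\<delta> \<in> Tset P G p m" "z \<in> set_pmf P" shows "vfun P G p m z \<le> \<delta>"
proof -
  have "measure_pmf.prob P {x. vfun P G p m x \<le> \<delta>} = 1" using assms(1) unfolding Tset_def by blast
  hence "AE x in measure_pmf P. x \<in> {x. vfun P G p m x \<le> \<delta>}"
    by (subst (asm) measure_pmf.prob_eq_1) auto
  thus ?thesis using assms(2) by (auto simp: AE_measure_pmf_iff)
qed

lemma delta0_bound:
  assumes fin: "finite (set_pmf P)" and m: "m \<in> {1..M}" and finG: "finite (G m)" and i: "i \<in> G m"
    and z: "z \<in> set_pmf P"
  shows "\<bar>cond_exp P ({1..p} - G m) (\<lambda>y. if y i then 1 else 0) z - measure_pmf.prob P {y. y i}\<bar> \<le> delta0 P G M p"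
proof -
  have "\<bar>cond_exp P ({1..p} - G m) (\<lambda>y. if y i then 1 else 0) z - measure_pmf.prob P {y. y i}\<bar> \<le> vfun P G p m z"
    unfolding vfun_def using finG i by (intro Max_ge) auto
  also have "\<dots> \<le> Inf (Tset P G p m)"
    using Tset_ne[OF fin, of G p m] Tset_lb[OF _ z] by (intro cInf_greatest) auto
  also have "\<dots> \<le> delta0 P G M p" unfolding delta0_alt using m by (intro Max_ge) auto
  finally show ?thesis .
qed

lemma delta0_nonneg:
  assumes fin: "finite (set_pmf P)" and m: "m \<in> {1..M}"
  shows "0 \<le> delta0 P G M p"
proof -
  have "0 \<le> Inf (Tset P G p m)"
    using Tset_ne[OF fin] by (intro cInf_greatest) (auto simp: Tset_def)
  also have "\<dots> \<le> delta0 P G M p" unfolding delta0_alt using m by (intro Max_ge) auto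
  finally show ?thesis .
qed



lemma pmin_bound:
  assumes G_ne: "\<And>k. k \<in> {1..M} \<Longrightarrow> G k \<noteq> {}"
    and G_cover: "(\<Union>k\<in>{1..M}. G k) = {1..p}"
    and M2: "M \<ge> 2" and m: "m \<in> {1..M}" and i: "i \<in> G m"
  shows "p_min P G M \<le> measure_pmf.prob P {y. y i = a}"
proof -
  define PS where "PS = {measure_pmf.prob P {x. x i = a \<and> x j = b} | l k i j a b.
      1 \<le> l \<and> l < k \<and> k \<le> M \<and> i \<in> G l \<and> j \<in> G k}"
  have pm: "p_min P G M = Min PS" unfolding p_min_def PS_def ..
  have "PS \<subseteq> (\<lambda>(i,j,a,b). measure_pmf.prob P {x. x i = a \<and> x j = b}) ` ({1..p}\<times>{1..p}\<times>UNIV\<times>UNIV)"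
  proof
    fix v assume "v \<in> PS"
    then obtain l k i j a b where v: "v = measure_pmf.prob P {x. x i = a \<and> x j = b}"
      and c: "1 \<le> l \<and> l < k \<and> k \<le> M \<and> i \<in> G l \<and> j \<in> G k" unfolding PS_def by blast
    have "i \<in> {1..p}" "j \<in> {1..p}" using c G_cover by auto
    thus "v \<in> (\<lambda>(i,j,a,b). measure_pmf.prob P {x. x i = a \<and> x j = b}) ` ({1..p}\<times>{1..p}\<times>UNIV\<times>UNIV)"
      using v by (intro image_eqI[where x="(i,j,a,b)"]) auto
  qed
  hence finPS: "finite PS" by (rule finite_subset) simp
  define k where "k = (if m = 1 then 2 else (1::nat))"
  have k: "k \<in> {1..M}" "k \<noteq> m" using M2 m unfolding k_def by auto
  obtain j where j: "j \<in> G k" using G_ne[OF k(1)] by blast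
  show ?thesis
  proof (cases "m < k")
    case True
    have "measure_pmf.prob P {x. x i = a \<and> x j = True} \<in> PS"
      unfolding PS_def using True m k i j by (intro CollectI exI[of _ m] exI[of _ k] exI[of _ i] exI[of _ j] exI[of _ a] exI[of _ True]) auto
    hence "Min PS \<le> measure_pmf.prob P {x. x i = a \<and> x j = True}" using finPS by (rule Min_le[rotated])
    also have "\<dots> \<le> measure_pmf.prob P {y. y i = a}" by (rule measure_pmf.finite_measure_mono) auto
    finally show ?thesis using pm by simp
  next
    case False
    hence "k < m" using k by simp
    have "measure_pmf.prob P {x. x j = True \<and> x i = a} \<in> PS"
      unfolding PS_def using \<open>k < m\<close> m k i j by (intro CollectI exI[of _ k] exI[of _ m] exI[of _ j] exI[of _ i] exI[of _ True] exI[of _ a]) auto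
    hence "Min PS \<le> measure_pmf.prob P {x. x j = True \<and> x i = a}" using finPS by (rule Min_le[rotated])
    also have "\<dots> \<le> measure_pmf.prob P {y. y i = a}" by (rule measure_pmf.finite_measure_mono) auto
    finally show ?thesis using pm by simp
  qed
qed



theorem mainTheorem10:
  fixes P :: "(nat \<Rightarrow> bool) pmf" and p M s m :: nat and G :: "nat \<Rightarrow> nat set"
    and f :: "(nat \<Rightarrow> bool) \<Rightarrow> real" and ms :: "nat \<Rightarrow> nat"
  assumes supp: "\<And>x i. x \<in> set_pmf P \<Longrightarrow> x i \<Longrightarrow> i \<in> {1..p}"
    and M2: "M \<ge> 2"
    and G_ne: "\<And>k. k \<in> {1..M} \<Longrightarrow> G k \<noteq> {}"
    and G_disj: "\<And>k l. k \<in> {1..M} \<Longrightarrow> l \<in> {1..M} \<Longrightarrow> k \<noteq> l \<Longrightarrow> G k \<inter> G l = {}"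
    and G_cover: "(\<Union>k\<in>{1..M}. G k) = {1..p}"
    and onehot: "\<And>k. k \<in> {1..M} \<Longrightarrow> card (G k) > 1 \<Longrightarrow>
                   (AE x in measure_pmf P. card {j \<in> G k. x j} = 1)"
    and mean0: "measure_pmf.expectation P f = 0"
    and pmin_pos: "p_min P G M > 0"
    and s1: "s \<ge> 1"
    and ms_range: "\<And>t. t \<in> {1..s-1} \<Longrightarrow> ms t \<in> {1..M}"
    and m_range: "m \<in> {1..M} - ms ` {1..s-1}"
  shows "\<bar>measure_pmf.expectation P
            (\<lambda>x. (cond_exp P (G m) (\<lambda>y. f y - R_seq P G f ms (s-1) y) x)\<^sup>2)
          - measure_pmf.variance P (g_fun P G p f m)\<bar>
         \<le> 21 * delta0 P G M p / (p_min P G M)\<^sup>2 * measure_pmf.expectation P (\<lambda>x. (f x)\<^sup>2)"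
proof -
  have fin: "finite (set_pmf P)"
  proof -
    have "set_pmf P \<subseteq> (\<lambda>T i. i \<in> T) ` Pow {1..p}"
    proof
      fix x assume x: "x \<in> set_pmf P"
      have "x = (\<lambda>i. i \<in> {i. x i})" by auto
      moreover have "{i. x i} \<in> Pow {1..p}" using supp[OF x] by auto
      ultimately show "x \<in> (\<lambda>T i. i \<in> T) ` Pow {1..p}" by blast
    qed
    thus ?thesis by (rule finite_subset) simp
  qed
  have m: "m \<in> {1..M}" and mnot: "m \<notin> ms ` {1..s-1}" using m_range by auto
  define D where "D = {1..p} - G m"
  have Gsub: "\<And>k. k \<in> {1..M} \<Longrightarrow> G k \<subseteq> {1..p}" using G_cover by blast
  have finG: "finite (G m)" using Gsub[OF m] finite_subset by blast
  define pm where "pm = p_min P G M"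
  define d0 where "d0 = delta0 P G M p"
  define F where "F = measure_pmf.expectation P (\<lambda>x. (f x)\<^sup>2)"
  define E where "E = (\<lambda>u. measure_pmf.expectation P (u :: (nat \<Rightarrow> bool) \<Rightarrow> real))"
  have Esum: "E u = (\<Sum>x\<in>set_pmf P. pmf P x * u x)" for u unfolding E_def by (rule E_sum[OF fin])
  have RD: "t \<le> s-1 \<Longrightarrow> agree D y z \<Longrightarrow> R_seq P G f ms t y = R_seq P G f ms t z" for t y z
  proof (induction t)
    case 0 thus ?case by simp
  next
    case (Suc t)
    have t: "Suc t \<in> {1..s-1}" using Suc.prems by auto
    hence k: "ms (Suc t) \<in> {1..M}" "ms (Suc t) \<noteq> m" using ms_range mnot by (auto simp: image_iff)
    have "G (ms (Suc t)) \<subseteq> D" unfolding D_def using Gsub[OF k(1)] G_disj[OF k(1) m k(2)] by blast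
    hence "agree (G (ms (Suc t))) y z" using Suc.prems(2) unfolding agree_def by blast
    hence "cond_exp P (G (ms (Suc t))) (\<lambda>y. f y - R_seq P G f ms t y) y
         = cond_exp P (G (ms (Suc t))) (\<lambda>y. f y - R_seq P G f ms t y) z" by (rule cond_exp_meas)
    thus ?case using Suc by simp
  qed
  have F1: "E (\<lambda>x. (f x - R_seq P G f ms t x)\<^sup>2) \<le> F" for t
  proof (induction t)
    case 0 thus ?case by (simp add: F_def E_def)
  next
    case (Suc t)
    define Y where "Y = (\<lambda>y. f y - R_seq P G f ms t y)"
    have "(\<lambda>x. (f x - R_seq P G f ms (Suc t) x)\<^sup>2) = (\<lambda>x. (Y x - cond_exp P (G (ms (Suc t))) Y x)\<^sup>2)"
      by (simp add: Y_def algebra_simps)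
    hence "E (\<lambda>x. (f x - R_seq P G f ms (Suc t) x)\<^sup>2) \<le> E (\<lambda>x. (Y x)\<^sup>2)"
      unfolding E_def using cond_exp_contr(2)[OF fin] by simp
    thus ?case using Suc.IH unfolding Y_def by simp
  qed
  have F2: "E (R_seq P G f ms t) = 0" for t
  proof (induction t)
    case 0 thus ?case by (simp add: E_def)
  next
    case (Suc t)
    define Y where "Y = (\<lambda>y. f y - R_seq P G f ms t y)"
    have "E (R_seq P G f ms (Suc t)) = E (R_seq P G f ms t) + E (cond_exp P (G (ms (Suc t))) Y)"
      unfolding Esum by (simp add: Y_def algebra_simps sum.distrib)
    also have "E (cond_exp P (G (ms (Suc t))) Y) = E Y" unfolding E_def by (rule cond_exp_tower[OF fin])
    also have "E Y = E f - E (R_seq P G f ms t)" unfolding Esum Y_def by (simp add: algebra_simps sum_subtractf)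
    finally show ?case using Suc.IH mean0 by (simp add: E_def)
  qed
  define R where "R = R_seq P G f ms (s-1)"
  define r where "r = (\<lambda>x. f x - R x)"
  define q where "q = (\<lambda>x. f x - cond_exp P D f x)"
  define h where "h = (\<lambda>x. cond_exp P D f x - R x)"
  define a where "a = cond_exp P (G m) r"
  define b where "b = g_fun P G p f m"
  have b_def': "b = cond_exp P (G m) q" unfolding b_def g_fun_def q_def D_def ..
  have ab: "a x - b x = cond_exp P (G m) h x" for x
  proof -
    have "(\<lambda>y. r y - q y) = h" unfolding r_def q_def h_def by auto
    thus ?thesis unfolding a_def b_def' using cond_exp_diff[OF fin, of "G m" r q x] by simp
  qed
  have hD: "agree D y z \<Longrightarrow> h y = h z" for y z
    unfolding h_def R_def using RD[of "s-1" y z] cond_exp_meas[of D y z P f] by simp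
  have h0: "E h = 0"
  proof -
    have "E h = E (cond_exp P D f) - E R" unfolding Esum h_def by (simp add: algebra_simps sum_subtractf)
    also have "E (cond_exp P D f) = E f" unfolding E_def by (rule cond_exp_tower[OF fin])
    finally show ?thesis using mean0 F2 unfolding R_def E_def by simp
  qed
  have Er2: "E (\<lambda>x. (r x)\<^sup>2) \<le> F" unfolding r_def R_def by (rule F1)
  have Eq2: "E (\<lambda>x. (q x)\<^sup>2) \<le> F" unfolding q_def E_def F_def by (rule cond_exp_contr(2)[OF fin])
  have Ea2: "E (\<lambda>x. (a x)\<^sup>2) \<le> F" using cond_exp_contr(1)[OF fin, of "G m" r] Er2 unfolding a_def E_def by simp
  have Eb2: "E (\<lambda>x. (b x)\<^sup>2) \<le> F" using cond_exp_contr(1)[OF fin, of "G m" q] Eq2 unfolding b_def' E_def by simp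
  have Eh2: "E (\<lambda>x. (h x)\<^sup>2) \<le> 4 * F"
  proof -
    have "E (\<lambda>x. (h x)\<^sup>2) \<le> E (\<lambda>x. 2 * (r x)\<^sup>2 + 2 * (q x)\<^sup>2)"
      unfolding Esum
    proof (rule sum_mono)
      fix x
      have "h x = r x - q x" unfolding h_def r_def q_def by simp
      moreover have "(r x - q x)\<^sup>2 + (r x + q x)\<^sup>2 = 2 * (r x)\<^sup>2 + 2 * (q x)\<^sup>2"
        by (simp add: power2_eq_square algebra_simps)
      moreover have "0 \<le> (r x + q x)\<^sup>2" by simp
      ultimately have "(r x - q x)\<^sup>2 \<le> 2 * (r x)\<^sup>2 + 2 * (q x)\<^sup>2" by linarith
      hence "(h x)\<^sup>2 \<le> 2 * (r x)\<^sup>2 + 2 * (q x)\<^sup>2" using \<open>h x = r x - q x\<close> by simp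
      thus "pmf P x * (h x)\<^sup>2 \<le> pmf P x * (2 * (r x)\<^sup>2 + 2 * (q x)\<^sup>2)" by (simp add: mult_left_mono)
    qed
    also have "\<dots> = 2 * E (\<lambda>x. (r x)\<^sup>2) + 2 * E (\<lambda>x. (q x)\<^sup>2)"
      unfolding Esum by (simp add: algebra_simps sum.distrib sum_distrib_left)
    finally show ?thesis using Er2 Eq2 by linarith
  qed
  have Eb0: "E b = 0"
  proof -
    have "E b = E q" unfolding b_def' E_def by (rule cond_exp_tower[OF fin])
    also have "\<dots> = E f - E (cond_exp P D f)" unfolding Esum q_def by (simp add: algebra_simps sum_subtractf)
    also have "E (cond_exp P D f) = E f" unfolding E_def by (rule cond_exp_tower[OF fin])
    finally show ?thesis by simp
  qed
  have var: "measure_pmf.variance P b = E (\<lambda>x. (b x)\<^sup>2)"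
    using Eb0 unfolding E_def by simp
  define c where "c = d0 * E (\<lambda>y. \<bar>h y\<bar>) / pm"
  have pbound: "\<bar>a x - b x\<bar> \<le> c" if x: "x \<in> set_pmf P" for x
  proof -
    define A where "A = {y. \<forall>j\<in>G m. y j = x j}"
    obtain i where i: "i \<in> G m" and key: "\<And>y. y \<in> set_pmf P \<Longrightarrow> (y \<in> A) = (y i = x i)"
    proof (cases "card (G m) > 1")
      case True
      have AE: "\<forall>y\<in>set_pmf P. card {j \<in> G m. y j} = 1" using onehot[OF m True] by (simp add: AE_measure_pmf_iff)
      obtain i where xi: "{j \<in> G m. x j} = {i}" using AE x by (metis card_1_singletonE)
      have i: "i \<in> G m" "x i" using xi by auto
      have xe: "x j = (j = i)" if "j \<in> G m" for j using xi that by blast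
      show ?thesis
      proof (rule that[OF i(1)])
        fix y assume y: "y \<in> set_pmf P"
        obtain i' where yi: "{j \<in> G m. y j} = {i'}" using AE y by (metis card_1_singletonE)
        show "(y \<in> A) = (y i = x i)"
        proof
          assume "y \<in> A" thus "y i = x i" using i unfolding A_def by auto
        next
          assume "y i = x i"
          hence "y i" using i by simp
          hence "i' = i" using yi i by auto
          hence ye: "y j = (j = i)" if "j \<in> G m" for j using yi that by blast
          have "\<forall>j\<in>G m. y j = x j" using xe ye by simp
          thus "y \<in> A" unfolding A_def by simp
        qed
      qed
    next
      case False
      have "card (G m) \<noteq> 0" using finG G_ne[OF m] by simp
      hence "card (G m) = 1" using False by simp
      then obtain i where "G m = {i}" by (rule card_1_singletonE)
      thus ?thesis using that[of i] unfolding A_def by auto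
    qed
    define X where "X = (\<lambda>y. if y i then 1 else 0 :: real)"
    have ind: "indicator A y = (if x i then X y else 1 - X y)" if "y \<in> set_pmf P" for y
      using key[OF that] unfolding X_def by (auto split: split_indicator)
    have pA: "measure_pmf.prob P A = measure_pmf.prob P {y. y i = x i}"
      unfolding prob_sum[OF fin] by (intro sum.cong refl) (auto simp: key split: split_indicator)
    have pAi: "measure_pmf.prob P {y. y i = x i} = (if x i then measure_pmf.prob P {y. y i} else 1 - measure_pmf.prob P {y. y i})"
    proof (cases "x i")
      case True thus ?thesis by simp
    next
      case False
      have "measure_pmf.prob P {y. y i = x i} = (\<Sum>y\<in>set_pmf P. pmf P y - pmf P y * indicator {y. y i} y)"
        unfolding prob_sum[OF fin] using False by (intro sum.cong refl) (auto split: split_indicator)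
      also have "\<dots> = 1 - measure_pmf.prob P {y. y i}"
        unfolding sum_subtractf sum_pmf_one[OF fin] prob_sum[OF fin] ..
      finally show ?thesis using False by simp
    qed
    have ce1: "cond_exp P D (\<lambda>_. 1) z = 1" if z: "z \<in> set_pmf P" for z
    proof -
      have "measure_pmf.prob P {y. \<forall>j\<in>D. y j = z j} > 0" by (rule measure_pmf_posI[OF z]) simp
      thus ?thesis unfolding cond_exp_def Let_def by simp
    qed
    have ceA: "cond_exp P D (indicator A) z = (if x i then cond_exp P D X z else 1 - cond_exp P D X z)"
      if z: "z \<in> set_pmf P" for z
    proof -
      have "cond_exp P D (indicator A) z = cond_exp P D (\<lambda>y. if x i then X y else 1 - X y) z"
        by (rule cond_exp_cong[OF fin]) (rule ind)
      also have "\<dots> = (if x i then cond_exp P D X z else 1 - cond_exp P D X z)"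
      proof (cases "x i")
        case True thus ?thesis by simp
      next
        case False
        have "cond_exp P D (\<lambda>y. 1 - X y) z = cond_exp P D (\<lambda>_. 1) z - cond_exp P D X z"
          by (rule cond_exp_diff[OF fin])
        thus ?thesis using False ce1[OF z] by simp
      qed
      finally show ?thesis .
    qed
    have bnd: "\<bar>cond_exp P D (indicator A) z - measure_pmf.prob P A\<bar> \<le> d0" if z: "z \<in> set_pmf P" for z
    proof -
      have "\<bar>cond_exp P D (indicator A) z - measure_pmf.prob P A\<bar> = \<bar>cond_exp P D X z - measure_pmf.prob P {y. y i}\<bar>"
        using ceA[OF z] pA pAi by (cases "x i") (auto simp: abs_minus_commute)
      also have "\<dots> \<le> d0" unfolding d0_def D_def X_def by (rule delta0_bound[where G=G and m=m, OF fin m finG i z])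
      finally show ?thesis .
    qed
    have pmA: "pm \<le> measure_pmf.prob P A"
      unfolding pA pm_def by (rule pmin_bound[OF G_ne G_cover M2 m i])
    have "\<bar>cond_exp P (G m) h x\<bar> \<le> d0 * measure_pmf.expectation P (\<lambda>y. \<bar>h y\<bar>) / pm"
      by (rule keyK[OF fin x, of D h "G m" d0 pm]) (use hD h0 bnd pmA pmin_pos in \<open>auto simp: E_def A_def pm_def\<close>)
    thus ?thesis unfolding c_def ab E_def .
  qed

  have pm0: "pm > 0" unfolding pm_def by (rule pmin_pos)
  obtain i0 where i0: "i0 \<in> G m" using G_ne[OF m] by blast
  have pm1: "pm \<le> 1"
    using pmin_bound[OF G_ne G_cover M2 m i0, of P True] measure_pmf.prob_le_1[of P] unfolding pm_def
    by (meson order_trans)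
  have d00: "d0 \<ge> 0" unfolding d0_def by (rule delta0_nonneg[OF fin m])
  have F0: "F \<ge> 0" unfolding F_def by (rule Bochner_Integration.integral_nonneg) auto
  define sF where "sF = sqrt F"
  have sF0: "sF \<ge> 0" unfolding sF_def using F0 by simp
  have sFF: "sF * sF = F" unfolding sF_def using F0 by simp
  have Eabs: "E (\<lambda>y. \<bar>u y\<bar>) \<le> sqrt (E (\<lambda>y. (u y)\<^sup>2))" for u unfolding E_def by (rule E_abs_le[OF fin])
  have Ea: "E (\<lambda>y. \<bar>a y\<bar>) \<le> sF"
    using Eabs[of a] real_sqrt_le_mono[OF Ea2] unfolding sF_def by linarith
  have Eb: "E (\<lambda>y. \<bar>b y\<bar>) \<le> sF"
    using Eabs[of b] real_sqrt_le_mono[OF Eb2] unfolding sF_def by linarith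
  have Eh: "E (\<lambda>y. \<bar>h y\<bar>) \<le> 2 * sF"
  proof -
    have "sqrt (E (\<lambda>y. (h y)\<^sup>2)) \<le> sqrt (4 * F)" by (rule real_sqrt_le_mono[OF Eh2])
    also have "sqrt (4 * F) = 2 * sF" unfolding sF_def by (simp add: real_sqrt_mult)
    finally show ?thesis using Eabs[of h] by linarith
  qed
  have Eh0: "E (\<lambda>y. \<bar>h y\<bar>) \<ge> 0" unfolding E_def by (rule Bochner_Integration.integral_nonneg) auto
  have c0: "c \<ge> 0" unfolding c_def using d00 Eh0 pm0 by simp
  have cle: "c \<le> d0 * (2 * sF) / pm" unfolding c_def using d00 Eh pm0
    by (intro divide_right_mono mult_left_mono) auto
  have "\<bar>E (\<lambda>x. (a x)\<^sup>2) - E (\<lambda>x. (b x)\<^sup>2)\<bar> = \<bar>\<Sum>x\<in>set_pmf P. pmf P x * ((a x - b x) * (a x + b x))\<bar>"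
    unfolding Esum by (simp add: power2_eq_square algebra_simps sum_subtractf)
  also have "\<dots> \<le> (\<Sum>x\<in>set_pmf P. \<bar>pmf P x * ((a x - b x) * (a x + b x))\<bar>)" by (rule sum_abs)
  also have "\<dots> \<le> (\<Sum>x\<in>set_pmf P. c * (pmf P x * \<bar>a x\<bar> + pmf P x * \<bar>b x\<bar>))"
  proof (rule sum_mono)
    fix x assume x: "x \<in> set_pmf P"
    have w: "pmf P x \<ge> 0" by simp
    have "\<bar>(a x - b x) * (a x + b x)\<bar> \<le> c * (\<bar>a x\<bar> + \<bar>b x\<bar>)"
      unfolding abs_mult using pbound[OF x] abs_triangle_ineq[of "a x" "b x"] c0
      by (intro mult_mono) auto
    hence "pmf P x * \<bar>(a x - b x) * (a x + b x)\<bar> \<le> pmf P x * (c * (\<bar>a x\<bar> + \<bar>b x\<bar>))"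
      using w by (rule mult_left_mono)
    show "\<bar>pmf P x * ((a x - b x) * (a x + b x))\<bar> \<le> c * (pmf P x * \<bar>a x\<bar> + pmf P x * \<bar>b x\<bar>)"
    proof -
      have "\<bar>pmf P x * ((a x - b x) * (a x + b x))\<bar> = pmf P x * \<bar>(a x - b x) * (a x + b x)\<bar>"
        using w by (simp only: abs_mult abs_of_nonneg)
      moreover have "pmf P x * (c * (\<bar>a x\<bar> + \<bar>b x\<bar>)) = c * (pmf P x * \<bar>a x\<bar> + pmf P x * \<bar>b x\<bar>)"
        by (simp add: algebra_simps)
      ultimately show ?thesis using \<open>pmf P x * \<bar>(a x - b x) * (a x + b x)\<bar> \<le> _\<close> by linarith
    qed
  qed
  also have "\<dots> = c * (E (\<lambda>y. \<bar>a y\<bar>) + E (\<lambda>y. \<bar>b y\<bar>))"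
    unfolding Esum by (simp only: sum_distrib_left[symmetric] sum.distrib)
  also have "\<dots> \<le> c * (2 * sF)" using Ea Eb c0 by (intro mult_left_mono) auto
  also have "\<dots> \<le> d0 * (2 * sF) / pm * (2 * sF)" using cle sF0 by (intro mult_right_mono) auto
  also have "\<dots> = 4 * d0 * F / pm" using sFF by (simp add: field_simps)
  also have "\<dots> \<le> 21 * d0 / pm\<^sup>2 * F"
  proof -
    have "4 * d0 * F / pm = (4 * pm) * (d0 * F) / pm\<^sup>2" using pm0 by (simp add: power2_eq_square field_simps)
    also have "\<dots> \<le> 21 * (d0 * F) / pm\<^sup>2"
      using pm1 pm0 d00 F0 by (intro divide_right_mono mult_right_mono) auto
    finally show ?thesis by simp
  qed
  finally have main: "\<bar>E (\<lambda>x. (a x)\<^sup>2) - E (\<lambda>x. (b x)\<^sup>2)\<bar> \<le> 21 * d0 / pm\<^sup>2 * F" .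
  show ?thesis using main var unfolding a_def r_def R_def b_def E_def d0_def pm_def F_def by simp
qed

end
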